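(* Let $k,n\ge1$, $T:\{0,1\}^k\to\{0,1\}$ a truth table, $(\mathbf z^{[1]},\mathbf z^{[0]},\mathbf z^{[-1]})$ a triple of $n$-bit strings with configuration basis numbers $(n_s)_{s\in\{0,1\}^3}$, and $f:\{0,1\}^3\to\mathbb C$ arbitrary. Then $$\mathbf E_\sigma f\big(\mathbf 1[\mathbf z^{[1]}\vdash\sigma],\mathbf 1[\mathbf z^{[0]}\vdash\sigma],\mathbf 1[\mathbf z^{[-1]}\vdash\sigma]\big)=\sum_{\mathbf y\in\{0,1\}^3}\sum_{\mathbf k\in\mathcal P(k)}f(\mathbf y)\,\frac{1}{2^k}\Big(\prod_{s\in\{0,1\}^3}\Big(\frac{n_s+n_{\bar s}}{n}\Big)^{k_s}\Big)\big|\mathcal Z(\mathbf y,\mathbf k)\big|.$$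
   Context: A clause on $n$ variables is $\sigma=((l_0,\nu_0),\dots,(l_{k-1},\nu_{k-1}))$ with $l_q\in\{0,\dots,n-1\}$, $\nu_q\in\{0,1\}$; $\mathbf x\in\{0,1\}^n$ satisfies $\sigma$ ($\mathbf x\vdash\sigma$) iff $T(x_{l_0}\oplus\nu_0,\dots,x_{l_{k-1}}\oplus\nu_{k-1})=1$. A random clause has all $l_q$ independent uniform in $\{0,\dots,n-1\}$ (repetitions allowed) and all $\nu_q$ independent uniform in $\{0,1\}$; $\mathbf E_\sigma$ is expectation over it. Configuration basis numbers of a triple of $q$-bit strings: $q_s=|\{j:(w^{[1]}_j,w^{[0]}_j,w^{[-1]}_j)=s\}|$, $s\in\{0,1\}^3$; $\bar s$ is the bitwise complement. $\mathcal P(k)$ is the set of families $(k_s)_{s\in\{0,1\}^3}$ of nonnegative integers summing to $k$. $\mathcal Z(\mathbf y,\mathbf k)$ is the set of triples $(\mathbf w^{[1]},\mathbf w^{[0]},\mathbf w^{[-1]})$ of $k$-bit strings with $T(\mathbf w^{[t]})=y^{[t]}$ for all $t\in\{1,0,-1\}$ and configuration basis numbers $\mathbf k$. *)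

theory Defs
  imports "HOL-Probability.Probability"
begin

text \<open>Bits are booleans (False = 0, True = 1); bit strings are bool lists. A truth table T is a function on
  bool lists (only its values on lists of length k matter).\<close>

definition satisfies :: "(bool list \<Rightarrow> bool) \<Rightarrow> bool list \<Rightarrow> (nat \<times> bool) list \<Rightarrow> bool" where
  "satisfies T x \<sigma> = T (map (\<lambda>(l, \<nu>). x ! l \<noteq> \<nu>) \<sigma>)"

text \<open>Clauses on n variables of length k; a random clause is uniform on this set
  (equivalently all l_q, nu_q independent uniform).\<close>
definition clauses :: "nat \<Rightarrow> nat \<Rightarrow> (nat \<times> bool) list set" where
  "clauses n k = {\<sigma>. length \<sigma> = k \<and> (\<forall>p\<in>set \<sigma>. fst p < n)}"

definition E_clause :: "nat \<Rightarrow> nat \<Rightarrow> ((nat \<times> bool) list \<Rightarrow> complex) \<Rightarrow> complex" where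
  "E_clause n k g = measure_pmf.expectation (pmf_of_set (clauses n k)) g"

definition config :: "bool list \<Rightarrow> bool list \<Rightarrow> bool list \<Rightarrow> bool \<times> bool \<times> bool \<Rightarrow> nat" where
  "config w1 w0 wm s = card {j. j < length w1 \<and> (w1 ! j, w0 ! j, wm ! j) = s}"

definition compl3 :: "bool \<times> bool \<times> bool \<Rightarrow> bool \<times> bool \<times> bool" where
  "compl3 s = (\<not> fst s, \<not> fst (snd s), \<not> snd (snd s))"

definition Pk :: "nat \<Rightarrow> (bool \<times> bool \<times> bool \<Rightarrow> nat) set" where
  "Pk k = {kv. (\<Sum>s\<in>UNIV. kv s) = k}"

definition Zset :: "(bool list \<Rightarrow> bool) \<Rightarrow> nat \<Rightarrow> bool \<times> bool \<times> bool \<Rightarrow> (bool \<times> bool \<times> bool \<Rightarrow> nat)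
    \<Rightarrow> (bool list \<times> bool list \<times> bool list) set" where
  "Zset T k y kv = {(w1, w0, wm). length w1 = k \<and> length w0 = k \<and> length wm = k \<and>
      T w1 = fst y \<and> T w0 = fst (snd y) \<and> T wm = snd (snd y) \<and> config w1 w0 wm = kv}"

end

theory Submission imports Defs begin

lemma E_pmf_complex:
  fixes g :: "'a \<Rightarrow> complex"
  assumes "finite S" "S \<noteq> {}"
  shows "measure_pmf.expectation (pmf_of_set S) g = (\<Sum>a\<in>S. g a) / of_nat (card S)"
proof -
  have "measure_pmf.expectation (pmf_of_set S) g = (\<Sum>a\<in>S. pmf (pmf_of_set S) a *\<^sub>R g a)"
    by (rule integral_measure_pmf[OF assms(1)]) (use assms in auto)
  also have "\<dots> = (\<Sum>a\<in>S. g a / of_nat (card S))"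
    using assms by (intro sum.cong) (auto simp: scaleR_conv_of_real divide_simps)
  finally show ?thesis by (simp add: sum_divide_distrib)
qed

lemma sum_lists_map:
  fixes G :: "'b::finite list \<Rightarrow> complex" and \<psi> :: "'a \<Rightarrow> 'b"
  assumes "finite A"
  shows "(\<Sum>\<sigma>\<in>{\<sigma>. set \<sigma> \<subseteq> A \<and> length \<sigma> = k}. G (map \<psi> \<sigma>)) =
    (\<Sum>c\<in>{c. set c \<subseteq> UNIV \<and> length c = k}. G c * (\<Prod>s\<in>UNIV. of_nat (card {a\<in>A. \<psi> a = s}) ^ count_list c s))"
  using assms
proof (induction k arbitrary: G)
  case 0
  have e: "{xs. set xs \<subseteq> B \<and> length xs = 0} = {[]}" for B :: "'c set" by auto
  show ?case by (simp only: e) simp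
next
  case (Suc k)
  let ?S = "\<lambda>B. {xs. set xs \<subseteq> B \<and> length xs = k}"
  let ?h = "\<lambda>s. (of_nat (card {a\<in>A. \<psi> a = s}) :: complex)"
  let ?P = "\<lambda>c. \<Prod>s\<in>UNIV. ?h s ^ count_list c s"
  have inj: "inj_on (\<lambda>(xs, n). n#xs) X" for X :: "('c list \<times> 'c) set" by (auto simp: inj_on_def)
  have fin: "finite (?S B)" if "finite B" for B :: "'c set" using finite_lists_length_eq[OF that] .
  have "(\<Sum>\<sigma>\<in>{\<sigma>. set \<sigma> \<subseteq> A \<and> length \<sigma> = Suc k}. G (map \<psi> \<sigma>))
      = (\<Sum>(xs,x)\<in>?S A \<times> A. G (\<psi> x # map \<psi> xs))"
    unfolding lists_length_Suc_eq by (subst sum.reindex[OF inj]) (simp add: case_prod_unfold)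
  also have "\<dots> = (\<Sum>x\<in>A. \<Sum>xs\<in>?S A. G (\<psi> x # map \<psi> xs))"
    by (subst sum.cartesian_product[symmetric]) (rule sum.swap)
  also have "\<dots> = (\<Sum>x\<in>A. \<Sum>c\<in>?S UNIV. G (\<psi> x # c) * ?P c)"
    by (intro sum.cong refl, rule Suc.IH[OF Suc.prems])
  also have "\<dots> = (\<Sum>b\<in>UNIV. \<Sum>x\<in>{x\<in>A. \<psi> x = b}. \<Sum>c\<in>?S UNIV. G (\<psi> x # c) * ?P c)"
    by (rule sum.group[symmetric]) (use Suc.prems in auto)
  also have "\<dots> = (\<Sum>b\<in>UNIV. \<Sum>c\<in>?S UNIV. G (b # c) * (?h b * ?P c))"
    by (intro sum.cong refl) (simp add: sum_distrib_left mult_ac)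
  also have "\<dots> = (\<Sum>(c,b)\<in>?S UNIV \<times> UNIV. G (b # c) * ?P (b # c))"
  proof -
    have "?h b * ?P c = ?P (b # c)" for b c
    proof -
      have "?P (b # c) = (\<Prod>s\<in>UNIV. (if b = s then ?h s else 1) * ?h s ^ count_list c s)"
        by (intro prod.cong) auto
      also have "\<dots> = ?h b * ?P c" by (simp add: prod.distrib prod.delta)
      finally show ?thesis by simp
    qed
    then show ?thesis
      by (subst sum.cartesian_product[symmetric]) (subst sum.swap, simp)
  qed
  also have "\<dots> = (\<Sum>c\<in>{c. set c \<subseteq> UNIV \<and> length c = Suc k}. G c * ?P c)"
    unfolding lists_length_Suc_eq by (subst sum.reindex[OF inj]) (simp add: case_prod_unfold)
  finally show ?case .
qed

definition unzip3 :: "(bool \<times> bool \<times> bool) list \<Rightarrow> bool list \<times> bool list \<times> bool list" where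
  "unzip3 c = (map fst c, map (fst \<circ> snd) c, map (snd \<circ> snd) c)"

lemma config_unzip3: "case_prod (\<lambda>w1. case_prod (config w1)) (unzip3 c) s = count_list c s"
  unfolding unzip3_def config_def count_list_eq_length_filter length_filter_conv_card
  by (auto intro!: arg_cong[where f=card])

lemma unzip3_zip: "length w1 = length w0 \<Longrightarrow> length w0 = length wm \<Longrightarrow>
   unzip3 (zip w1 (zip w0 wm)) = (w1, w0, wm)"
  by (simp add: unzip3_def list_eq_iff_nth_eq)

lemma zip_unzip3: "(\<lambda>(w1, w0, wm). zip w1 (zip w0 wm)) (unzip3 c) = c"
  by (simp add: unzip3_def list_eq_iff_nth_eq)

lemma finite_Pk: "finite (Pk k)"
proof -
  have "Pk k \<subseteq> {g. \<forall>x. (x \<in> UNIV \<longrightarrow> g x \<in> {..k}) \<and> (x \<notin> UNIV \<longrightarrow> g x = 0)}"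
  proof
    fix kv assume "kv \<in> Pk k"
    then have "(\<Sum>s\<in>UNIV. kv s) = k" by (simp add: Pk_def)
    moreover have "kv x \<le> (\<Sum>s\<in>UNIV. kv s)" for x by (rule member_le_sum) auto
    ultimately show "kv \<in> {g. \<forall>x. (x \<in> UNIV \<longrightarrow> g x \<in> {..k}) \<and> (x \<notin> UNIV \<longrightarrow> g x = 0)}" by auto
  qed
  moreover have "finite ({g. \<forall>x. (x \<in> UNIV \<longrightarrow> g x \<in> {..k}) \<and> (x \<notin> UNIV \<longrightarrow> (g x :: nat) = 0)}
     :: (bool \<times> bool \<times> bool \<Rightarrow> nat) set)"
    by (rule finite_set_of_finite_funs) auto
  ultimately show ?thesis by (rule finite_subset)
qed

theorem mainTheorem9:
  fixes T :: "bool list \<Rightarrow> bool" and z1 z0 zm :: "bool list"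
    and f :: "bool \<times> bool \<times> bool \<Rightarrow> complex" and k n :: nat
  assumes "k \<ge> 1" and "n \<ge> 1"
    and "length z1 = n" and "length z0 = n" and "length zm = n"
  shows "E_clause n k (\<lambda>\<sigma>. f (satisfies T z1 \<sigma>, satisfies T z0 \<sigma>, satisfies T zm \<sigma>)) =
    (\<Sum>y\<in>UNIV. \<Sum>kv\<in>Pk k. f y * (1 / 2 ^ k) *
       (\<Prod>s\<in>UNIV. (of_nat (config z1 z0 zm s + config z1 z0 zm (compl3 s)) / of_nat n) ^ kv s) *
       of_nat (card (Zset T k y kv)))"
proof -
  define A where "A = ({..<n} \<times> UNIV :: (nat \<times> bool) set)"
  define \<psi> where "\<psi> = (\<lambda>(l::nat, \<nu>::bool). (z1 ! l \<noteq> \<nu>, z0 ! l \<noteq> \<nu>, zm ! l \<noteq> \<nu>))"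
  define G where "G = (\<lambda>c::(bool \<times> bool \<times> bool) list.
     f (T (map fst c), T (map (fst \<circ> snd) c), T (map (snd \<circ> snd) c)))"
  define cf where "cf = config z1 z0 zm"
  define h where "h = (\<lambda>s. of_nat (cf s + cf (compl3 s)) :: complex)"
  define P where "P = (\<lambda>kv. \<Prod>s\<in>UNIV. h s ^ kv s)"
  define W3 :: "(bool list \<times> bool list \<times> bool list) set"
    where "W3 = {(w1, w0, wm). length w1 = k \<and> length w0 = k \<and> length wm = k}"
  define F where "F = (\<lambda>(w1, w0, wm). f (T w1, T w0, T wm) * P (config w1 w0 wm))"
  have finA: "finite A" by (simp add: A_def)
  have cl: "clauses n k = {\<sigma>. set \<sigma> \<subseteq> A \<and> length \<sigma> = k}"
    by (auto simp: clauses_def A_def)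
  have cardcl: "card (clauses n k) = (2 * n) ^ k"
    unfolding cl card_lists_length_eq[OF finA] by (simp add: A_def mult.commute)
  have cl_ne: "clauses n k \<noteq> {}"
  proof -
    have "replicate k (0, False) \<in> clauses n k" using assms by (auto simp: clauses_def)
    then show ?thesis by auto
  qed
  have finW3: "finite W3"
  proof (rule finite_subset)
    show "W3 \<subseteq> unzip3 ` {c. set c \<subseteq> UNIV \<and> length c = k}"
    proof
      fix w assume "w \<in> W3"
      then obtain w1 w0 wm where w: "w = (w1, w0, wm)" "length w1 = k" "length w0 = k" "length wm = k"
        by (auto simp: W3_def)
      then have "w = unzip3 (zip w1 (zip w0 wm))" by (simp add: unzip3_zip)
      moreover have "zip w1 (zip w0 wm) \<in> {c. set c \<subseteq> UNIV \<and> length c = k}" using w by simp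
      ultimately show "w \<in> unzip3 ` {c. set c \<subseteq> UNIV \<and> length c = k}" by blast
    qed
    show "finite (unzip3 ` {c. set c \<subseteq> UNIV \<and> length c = k})"
      by (intro finite_imageI finite_lists_length_eq) simp
  qed
  have hcard: "of_nat (card {a\<in>A. \<psi> a = s}) = h s" for s
  proof -
    define col where "col = (\<lambda>l. (z1 ! l, z0 ! l, zm ! l))"
    have "{a\<in>A. \<psi> a = s} = (\<lambda>l. (l, False)) ` {l. l < n \<and> col l = s}
        \<union> (\<lambda>l. (l, True)) ` {l. l < n \<and> col l = compl3 s}"
      by (cases s) (auto simp: A_def \<psi>_def col_def compl3_def)
    then have "card {a\<in>A. \<psi> a = s} = card ((\<lambda>l. (l, False)) ` {l. l < n \<and> col l = s})
        + card ((\<lambda>l. (l, True)) ` {l. l < n \<and> col l = compl3 s})"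
      by (simp only:) (rule card_Un_disjoint, auto)
    also have "\<dots> = card {l. l < n \<and> col l = s} + card {l. l < n \<and> col l = compl3 s}"
      by (subst card_image, simp add: inj_on_def)+ (rule refl)
    also have "\<dots> = cf s + cf (compl3 s)"
      using assms by (simp add: cf_def config_def col_def)
    finally show ?thesis by (simp add: h_def)
  qed
  have sat: "(\<lambda>\<sigma>. f (satisfies T z1 \<sigma>, satisfies T z0 \<sigma>, satisfies T zm \<sigma>)) = (\<lambda>\<sigma>. G (map \<psi> \<sigma>))"
    by (auto simp: G_def satisfies_def \<psi>_def case_prod_unfold comp_def intro!: ext)
  have "E_clause n k (\<lambda>\<sigma>. f (satisfies T z1 \<sigma>, satisfies T z0 \<sigma>, satisfies T zm \<sigma>))
      = (\<Sum>\<sigma>\<in>clauses n k. G (map \<psi> \<sigma>)) / of_nat ((2 * n) ^ k)"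
    unfolding E_clause_def sat
    by (subst E_pmf_complex) (use cl_ne finite_lists_length_eq[OF finA] cl cardcl in auto)
  also have "(\<Sum>\<sigma>\<in>clauses n k. G (map \<psi> \<sigma>)) =
      (\<Sum>c\<in>{c. set c \<subseteq> UNIV \<and> length c = k}. G c * (\<Prod>s\<in>UNIV. h s ^ count_list c s))"
    unfolding cl sum_lists_map[OF finA] hcard ..
  also have "\<dots> = (\<Sum>w\<in>W3. F w)"
  proof (rule sum.reindex_bij_witness[where i = "\<lambda>(w1, w0, wm). zip w1 (zip w0 wm)" and j = unzip3])
    fix c :: "(bool \<times> bool \<times> bool) list" assume c: "c \<in> {c. set c \<subseteq> UNIV \<and> length c = k}"
    show "(\<lambda>(w1, w0, wm). zip w1 (zip w0 wm)) (unzip3 c) = c" by (rule zip_unzip3)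
    show "unzip3 c \<in> W3" using c by (simp add: unzip3_def W3_def)
    show "F (unzip3 c) = G c * (\<Prod>s\<in>UNIV. h s ^ count_list c s)"
      using config_unzip3[of c]
      by (simp add: F_def G_def P_def unzip3_def case_prod_unfold)
  next
    fix w assume w: "w \<in> W3"
    then show "unzip3 ((\<lambda>(w1, w0, wm). zip w1 (zip w0 wm)) w) = w"
      by (auto simp: W3_def unzip3_zip)
    show "(\<lambda>(w1, w0, wm). zip w1 (zip w0 wm)) w \<in> {c. set c \<subseteq> UNIV \<and> length c = k}"
      using w by (auto simp: W3_def)
  qed
  also have "\<dots> = (\<Sum>p\<in>UNIV \<times> Pk k. \<Sum>w\<in>{w\<in>W3. (\<lambda>(w1, w0, wm). ((T w1, T w0, T wm), config w1 w0 wm)) w = p}. F w)"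
  proof (rule sum.group[symmetric])
    show "finite W3" by (rule finW3)
    show "finite (UNIV \<times> Pk k :: ((bool \<times> bool \<times> bool) \<times> (bool \<times> bool \<times> bool \<Rightarrow> nat)) set)" by (simp add: finite_Pk)
    show "(\<lambda>(w1, w0, wm). ((T w1, T w0, T wm), config w1 w0 wm)) ` W3 \<subseteq> UNIV \<times> Pk k"
    proof clarsimp
      fix w1 w0 wm assume w: "(w1, w0, wm) \<in> W3"
      then have e: "unzip3 (zip w1 (zip w0 wm)) = (w1, w0, wm)" by (auto simp: W3_def unzip3_zip)
      have "config w1 w0 wm = count_list (zip w1 (zip w0 wm))"
        using config_unzip3[of "zip w1 (zip w0 wm)"] unfolding e by (auto intro!: ext)
      moreover have "sum (count_list (zip w1 (zip w0 wm))) UNIV = length (zip w1 (zip w0 wm))"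
        by (rule sum_count_set) auto
      ultimately show "config w1 w0 wm \<in> Pk k" using w by (simp add: Pk_def W3_def)
    qed
  qed
  also have "\<dots> = (\<Sum>(y, kv)\<in>UNIV \<times> Pk k. f y * P kv * of_nat (card (Zset T k y kv)))"
  proof (intro sum.cong refl, clarify)
    fix y :: "bool \<times> bool \<times> bool" and kv
    have "{w\<in>W3. (\<lambda>(w1, w0, wm). ((T w1, T w0, T wm), config w1 w0 wm)) w = (y, kv)} = Zset T k y kv"
      by (cases y) (auto simp: W3_def Zset_def)
    moreover have "\<And>w. w \<in> Zset T k y kv \<Longrightarrow> F w = f y * P kv"
      by (cases y) (auto simp: Zset_def F_def)
    ultimately show "(\<Sum>w\<in>{w\<in>W3. (\<lambda>(w1, w0, wm). ((T w1, T w0, T wm), config w1 w0 wm)) w = (y, kv)}. F w) =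
        f y * P kv * of_nat (card (Zset T k y kv))"
      by (simp add: mult.commute)
  qed
  finally have L: "E_clause n k (\<lambda>\<sigma>. f (satisfies T z1 \<sigma>, satisfies T z0 \<sigma>, satisfies T zm \<sigma>)) =
     (\<Sum>(y, kv)\<in>UNIV \<times> Pk k. f y * P kv * of_nat (card (Zset T k y kv))) / of_nat ((2 * n) ^ k)" .
  have key: "P kv / of_nat ((2 * n) ^ k) =
      (1 / 2 ^ k) * (\<Prod>s\<in>UNIV. (of_nat (config z1 z0 zm s + config z1 z0 zm (compl3 s)) / of_nat n) ^ kv s)"
    if "kv \<in> Pk k" for kv
  proof -
    have sk: "(\<Sum>s\<in>UNIV. kv s) = k" using that by (simp add: Pk_def)
    have "(\<Prod>s\<in>UNIV. (of_nat (config z1 z0 zm s + config z1 z0 zm (compl3 s)) / of_nat n) ^ kv s)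
        = P kv / (\<Prod>s\<in>UNIV. (of_nat n :: complex) ^ kv s)"
      by (simp add: P_def h_def cf_def power_divide prod_dividef)
    also have "(\<Prod>s\<in>UNIV. (of_nat n :: complex) ^ kv s) = of_nat n ^ k"
      by (simp add: power_sum[symmetric] sk)
    finally show ?thesis by (simp add: power_mult_distrib)
  qed
  show ?thesis
    unfolding L sum_divide_distrib sum.cartesian_product[symmetric]
  proof (intro sum.cong refl)
    fix y :: "bool \<times> bool \<times> bool" and kv assume kv: "kv \<in> Pk k"
    have "f y * P kv * of_nat (card (Zset T k y kv)) / of_nat ((2 * n) ^ k)
        = f y * (P kv / of_nat ((2 * n) ^ k)) * of_nat (card (Zset T k y kv))"
      by (simp add: field_simps)
    then show "f y * P kv * of_nat (card (Zset T k y kv)) / of_nat ((2 * n) ^ k) =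
      f y * (1 / 2 ^ k) *
       (\<Prod>s\<in>UNIV. (of_nat (config z1 z0 zm s + config z1 z0 zm (compl3 s)) / of_nat n) ^ kv s) *
       of_nat (card (Zset T k y kv))"
      unfolding key[OF kv] by (simp add: mult_ac)
  qed
qed

end
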